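(* Let $\alpha>-1$ and let $\phi(w)=aw+b$ with $a>0$ and $\mathrm{Re}(b)\ge 0$. Then $C_\phi$ does not admit an irregular vector on $\mathcal{A}^2_\alpha(\mathbb{C}_+)$; that is, there is no $f\in\mathcal{A}^2_\alpha(\mathbb{C}_+)$ with $\liminf_{n\to\infty}\|C_\phi^n f\|=0$ and $\limsup_{n\to\infty}\|C_\phi^n f\|=\infty$.
   Context: $\mathbb{C}_+=\{z\in\mathbb{C}:\mathrm{Re}(z)>0\}$. For $\alpha>-1$, $\mathcal{A}^2_\alpha(\mathbb{C}_+)$ is the Hilbert space of analytic $f:\mathbb{C}_+\to\mathbb{C}$ with $\|f\|^2=\frac{1}{\pi}\int_{-\infty}^{\infty}\int_0^\infty |f(x+iy)|^2x^\alpha\,dx\,dy<\infty$. $C_\phi f=f\circ\phi$ is the (bounded) composition operator. *)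

theory Defs
  imports "HOL-Analysis.Analysis"
begin

definition right_half_plane :: "complex set" where
  "right_half_plane = {z. Re z > 0}"

definition bergman_sqnorm :: "real \<Rightarrow> (complex \<Rightarrow> complex) \<Rightarrow> ennreal" where
  "bergman_sqnorm \<alpha> f =
     ennreal (1 / pi) *
     (\<integral>\<^sup>+ z. indicator right_half_plane z * ennreal ((cmod (f z))\<^sup>2 * Re z powr \<alpha>) \<partial>lborel)"

definition bergman_norm :: "real \<Rightarrow> (complex \<Rightarrow> complex) \<Rightarrow> ereal" where
  "bergman_norm \<alpha> f =
     (if bergman_sqnorm \<alpha> f = \<infinity> then \<infinity>
      else ereal (sqrt (enn2real (bergman_sqnorm \<alpha> f))))"

definition bergman_space :: "real \<Rightarrow> (complex \<Rightarrow> complex) set" where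
  "bergman_space \<alpha> =
     {f. f holomorphic_on right_half_plane \<and> bergman_sqnorm \<alpha> f < \<infinity>}"

definition comp_op :: "(complex \<Rightarrow> complex) \<Rightarrow> (complex \<Rightarrow> complex) \<Rightarrow> (complex \<Rightarrow> complex)" where
  "comp_op \<phi> f = f \<circ> \<phi>"

end

theory Submission
  imports Defs "HOL-Complex_Analysis.Complex_Analysis"
begin



lemma lborel_complex_eq:
  "lborel = distr (lborel \<Otimes>\<^sub>M lborel) borel (\<lambda>(x,y). Complex x y)"
proof (rule lborel_eqI)
  fix l u :: complex
  assume le: "\<And>b. b \<in> Basis \<Longrightarrow> l \<bullet> b \<le> u \<bullet> b"
  have m: "(\<lambda>(x,y). Complex x y) \<in> (lborel \<Otimes>\<^sub>M lborel) \<rightarrow>\<^sub>M (borel::complex measure)"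
    by (simp add: Complex_eq case_prod_unfold)
  have pre: "(\<lambda>(x,y). Complex x y) -` box l u \<inter> space (lborel \<Otimes>\<^sub>M lborel)
        = {Re l<..<Re u} \<times> {Im l<..<Im u}"
    by (auto simp: in_box_complex_iff space_pair_measure)
  show "emeasure (distr (lborel \<Otimes>\<^sub>M lborel) borel (\<lambda>(x,y). Complex x y)) (box l u) = (\<Prod>b\<in>Basis. (u - l) \<bullet> b)"
  proof -
    have "Re l \<le> Re u" "Im l \<le> Im u" using le[of 1] le[of \<i>] by (auto simp: Basis_complex_def inner_complex_def)
    then show ?thesis
    by (simp add: emeasure_distr[OF m] pre lborel.emeasure_pair_measure_Times Basis_complex_def
         inner_complex_def ennreal_mult[symmetric])
  qed
qed simp

lemma nn_integral_complex:
  fixes F :: "complex \<Rightarrow> ennreal"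
  assumes [measurable]: "F \<in> borel_measurable borel"
  shows "(\<integral>\<^sup>+z. F z \<partial>lborel) = (\<integral>\<^sup>+x. (\<integral>\<^sup>+y. F (Complex x y) \<partial>lborel) \<partial>lborel)"
proof -
  have m: "(\<lambda>(x,y). Complex x y) \<in> (lborel \<Otimes>\<^sub>M lborel) \<rightarrow>\<^sub>M (borel::complex measure)"
    by (simp add: Complex_eq case_prod_unfold)
  have "(\<integral>\<^sup>+z. F z \<partial>lborel) = (\<integral>\<^sup>+p. F (case p of (x,y) \<Rightarrow> Complex x y) \<partial>(lborel \<Otimes>\<^sub>M lborel))"
    by (subst lborel_complex_eq) (simp add: nn_integral_distr[OF m])
  also have "\<dots> = (\<integral>\<^sup>+x. (\<integral>\<^sup>+y. F (Complex x y) \<partial>lborel) \<partial>lborel)"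
  proof (subst lborel.nn_integral_fst[symmetric])
    have "(\<lambda>p. F (Complex (fst p) (snd p))) = F \<circ> (\<lambda>(x,y). Complex x y)" by (auto simp: case_prod_unfold)
    then show "(\<lambda>p. F (case p of (x,y) \<Rightarrow> Complex x y)) \<in> borel_measurable (lborel \<Otimes>\<^sub>M lborel)"
      using measurable_comp[OF m, of F] by (simp add: case_prod_unfold)
  qed (simp add: case_prod_unfold)
  finally show ?thesis .
qed


definition Fsq :: "(complex \<Rightarrow> complex) \<Rightarrow> complex \<Rightarrow> real" where
  "Fsq f z = (if Re z > 0 then (cmod (f z))\<^sup>2 else 0)"

definition Mf :: "(complex \<Rightarrow> complex) \<Rightarrow> real \<Rightarrow> ennreal" where
  "Mf f x = (\<integral>\<^sup>+y. ennreal (Fsq f (Complex x y)) \<partial>lborel)"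

definition Iw :: "real \<Rightarrow> (complex \<Rightarrow> complex) \<Rightarrow> real \<Rightarrow> ennreal" where
  "Iw \<alpha> f r = (\<integral>\<^sup>+x. ennreal (indicator {r<..} x * (x - r) powr \<alpha>) * Mf f x \<partial>lborel)"

lemma open_rhp: "open right_half_plane"
  unfolding right_half_plane_def by (simp add: open_halfspace_Re_gt)

lemma Fsq_measurable[measurable]:
  assumes "continuous_on right_half_plane f"
  shows "Fsq f \<in> borel_measurable borel"
proof -
  have "Fsq f = (\<lambda>z. indicator right_half_plane z *\<^sub>R (cmod (f z))\<^sup>2)"
    by (auto simp: Fsq_def right_half_plane_def indicator_def fun_eq_iff)
  moreover have "continuous_on right_half_plane (\<lambda>z. (cmod (f z))\<^sup>2)"
    by (intro continuous_intros assms)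
  moreover have "right_half_plane \<in> sets borel" using open_rhp by simp
  ultimately show ?thesis
    using borel_measurable_continuous_on_indicator[of right_half_plane "\<lambda>z. (cmod (f z))\<^sup>2"] by simp
qed

lemma Fsq_pair_measurable:
  assumes "continuous_on right_half_plane f"
  shows "(\<lambda>p. ennreal (Fsq f (Complex (fst p) (snd p)))) \<in> borel_measurable (lborel \<Otimes>\<^sub>M lborel)"
proof -
  have m: "(\<lambda>p. Complex (fst p) (snd p)) \<in> (lborel \<Otimes>\<^sub>M lborel) \<rightarrow>\<^sub>M (borel::complex measure)"
    by (simp add: Complex_eq)
  have "(\<lambda>z. ennreal (Fsq f z)) \<in> borel_measurable borel" using Fsq_measurable[OF assms] by simp
  from measurable_comp[OF m this] show ?thesis by (simp add: o_def)
qed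

lemma Mf_measurable[measurable]:
  assumes "continuous_on right_half_plane f"
  shows "Mf f \<in> borel_measurable borel"
proof -
  have "(\<lambda>x. \<integral>\<^sup>+y. ennreal (Fsq f (Complex (fst (x,y)) (snd (x,y)))) \<partial>lborel) \<in> borel_measurable lborel"
    using lborel.borel_measurable_nn_integral_fst[OF Fsq_pair_measurable[OF assms]] by simp
  then show ?thesis unfolding Mf_def by simp
qed


lemma sqnorm_affine:
  assumes cont: "continuous_on right_half_plane f" and c: "c > 0" and d: "Re d \<ge> 0"
  shows "bergman_sqnorm \<alpha> (f \<circ> (\<lambda>w. of_real c * w + d)) =
         ennreal (1/pi) * (ennreal (c powr (-2-\<alpha>)) * Iw \<alpha> f (Re d))"
proof -
  define \<psi> where "\<psi> = (\<lambda>w. of_real c * w + d)"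
  define A where "A = (\<lambda>x::real. ennreal (indicator {0<..} x * x powr \<alpha>))"
  have [measurable]: "A \<in> borel_measurable borel" unfolding A_def by measurable
  have psiC: "\<psi> (Complex x y) = Complex (c * x + Re d) (Im d + c * y)" for x y
    by (simp add: \<psi>_def complex_eq_iff)
  have "(\<lambda>x. Mf f (c * x + Re d)) \<in> borel_measurable borel"
    using measurable_comp[OF _ Mf_measurable[OF cont], of "\<lambda>x. c * x + Re d"] by (simp add: o_def)
  then have mAM: "(\<lambda>x. A x * Mf f (c * x + Re d)) \<in> borel_measurable borel" by measurable
  have S1: "indicator right_half_plane z * ennreal ((cmod ((f \<circ> \<psi>) z))\<^sup>2 * Re z powr \<alpha>)
        = A (Re z) * ennreal (Fsq f (\<psi> z))" for z
  proof (cases "Re z > 0")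
    case True
    then have "Re (\<psi> z) > 0" using c d by (simp add: \<psi>_def) (meson add_pos_nonneg mult_pos_pos)
    then show ?thesis using True
      by (simp add: A_def Fsq_def right_half_plane_def ennreal_mult' mult.commute)
  next
    case False
    then show ?thesis by (simp add: A_def right_half_plane_def)
  qed
  have mpsi[measurable]: "\<psi> \<in> borel_measurable borel" unfolding \<psi>_def by measurable
  have mF: "(\<lambda>z. A (Re z) * ennreal (Fsq f (\<psi> z))) \<in> borel_measurable borel"
  proof -
    have "(\<lambda>z. ennreal (Fsq f z)) \<in> borel_measurable borel" using Fsq_measurable[OF cont] by simp
    from measurable_comp[OF mpsi this] have "(\<lambda>z. ennreal (Fsq f (\<psi> z))) \<in> borel_measurable borel"
      by (simp add: o_def)
    then show ?thesis by measurable
  qed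
  have "bergman_sqnorm \<alpha> (f \<circ> \<psi>) = ennreal (1/pi) * (\<integral>\<^sup>+z. A (Re z) * ennreal (Fsq f (\<psi> z)) \<partial>lborel)"
    unfolding bergman_sqnorm_def S1 ..
  also have "(\<integral>\<^sup>+z. A (Re z) * ennreal (Fsq f (\<psi> z)) \<partial>lborel)
      = (\<integral>\<^sup>+x. (\<integral>\<^sup>+y. A x * ennreal (Fsq f (Complex (c * x + Re d) (Im d + c * y))) \<partial>lborel) \<partial>lborel)"
    by (subst nn_integral_complex[OF mF]) (simp add: psiC)
  also have "\<dots> = (\<integral>\<^sup>+x. A x * (ennreal (1/c) * Mf f (c * x + Re d)) \<partial>lborel)"
  proof (rule nn_integral_cong)
    fix x
    have mh: "(\<lambda>y. ennreal (Fsq f (Complex (c * x + Re d) y))) \<in> borel_measurable borel"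
    proof -
      have m2: "(\<lambda>y. Complex (c * x + Re d) y) \<in> borel_measurable borel" by (simp add: Complex_eq)
      have "(\<lambda>z. ennreal (Fsq f z)) \<in> borel_measurable borel" using Fsq_measurable[OF cont] by simp
      from measurable_comp[OF m2 this] show ?thesis by (simp add: o_def)
    qed
    have "Mf f (c * x + Re d) = ennreal c * (\<integral>\<^sup>+y. ennreal (Fsq f (Complex (c * x + Re d) (Im d + c * y))) \<partial>lborel)"
      unfolding Mf_def using nn_integral_real_affine[OF mh, of c "Im d"] c by simp
    then have "(\<integral>\<^sup>+y. ennreal (Fsq f (Complex (c * x + Re d) (Im d + c * y))) \<partial>lborel) = ennreal (1/c) * Mf f (c * x + Re d)"
      using c by (simp add: ennreal_mult'[symmetric] mult.assoc[symmetric] divide_ennreal[symmetric] ennreal_divide_times)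
    moreover have "(\<lambda>y. ennreal (Fsq f (Complex (c * x + Re d) (Im d + c * y)))) \<in> borel_measurable borel"
      using measurable_comp[OF _ mh, of "\<lambda>y. Im d + c * y"] by (simp add: o_def)
    ultimately show "(\<integral>\<^sup>+y. A x * ennreal (Fsq f (Complex (c * x + Re d) (Im d + c * y))) \<partial>lborel) = A x * (ennreal (1/c) * Mf f (c * x + Re d))"
      by (simp add: nn_integral_cmult)
  qed
  also have "\<dots> = ennreal (1/c) * (\<integral>\<^sup>+x. A x * Mf f (c * x + Re d) \<partial>lborel)"
    using mAM by (simp add: nn_integral_cmult[symmetric] mult.left_commute)
  finally have E1: "bergman_sqnorm \<alpha> (f \<circ> \<psi>) = ennreal (1/pi) * (ennreal (1/c) * (\<integral>\<^sup>+x. A x * Mf f (c * x + Re d) \<partial>lborel))"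
    by (simp add: comp_def)
  have mI: "(\<lambda>x. ennreal (indicator {Re d<..} x * (x - Re d) powr \<alpha>) * Mf f x) \<in> borel_measurable borel"
    using Mf_measurable[OF cont] by measurable
  have "Iw \<alpha> f (Re d) = ennreal c * (\<integral>\<^sup>+x. ennreal (indicator {Re d<..} (Re d + c * x) * (Re d + c * x - Re d) powr \<alpha>) * Mf f (Re d + c * x) \<partial>lborel)"
    unfolding Iw_def using c by (subst nn_integral_real_affine[OF mI, of c "Re d"]) auto
  also have "\<dots> = ennreal c * (\<integral>\<^sup>+x. ennreal (c powr \<alpha>) * (A x * Mf f (c * x + Re d)) \<partial>lborel)"
  proof -
    have "ennreal (indicator {Re d<..} (Re d + c * x) * (Re d + c * x - Re d) powr \<alpha>) = ennreal (c powr \<alpha>) * A x" for x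
      using c by (auto simp: A_def indicator_def powr_mult ennreal_mult' mult_less_cancel_left_pos zero_less_mult_iff)
    then show ?thesis by (simp add: mult.assoc add.commute)
  qed
  also have "\<dots> = ennreal (c * c powr \<alpha>) * (\<integral>\<^sup>+x. A x * Mf f (c * x + Re d) \<partial>lborel)"
    using c mAM by (simp add: nn_integral_cmult ennreal_mult mult.assoc)
  finally have E2: "Iw \<alpha> f (Re d) = ennreal (c * c powr \<alpha>) * (\<integral>\<^sup>+x. A x * Mf f (c * x + Re d) \<partial>lborel)" .
  have cc: "c powr (-2-\<alpha>) * (c * c powr \<alpha>) = 1/c"
  proof -
    have e1: "c * c powr \<alpha> = c powr (1+\<alpha>)" using c by (simp add: powr_add)
    have e2: "c powr (-2-\<alpha>) * c powr (1+\<alpha>) = c powr (-1)" by (simp add: powr_add[symmetric])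
    show ?thesis unfolding e1 e2 using c by (simp add: powr_minus_divide)
  qed
  have "bergman_sqnorm \<alpha> (f \<circ> \<psi>) = ennreal (1/pi) * (ennreal (c powr (-2-\<alpha>)) * Iw \<alpha> f (Re d))"
    unfolding E1 E2
  proof -
    have "c powr (- 2 - \<alpha>) * c * c powr \<alpha> / pi = 1 / (pi * c)" using cc by (simp add: mult.assoc)
    then show "ennreal (1 / pi) * (ennreal (1 / c) * \<integral>\<^sup>+ x. A x * Mf f (c * x + Re d) \<partial>lborel) =
    ennreal (1 / pi) * (ennreal (c powr (- 2 - \<alpha>)) * (ennreal (c * c powr \<alpha>) * \<integral>\<^sup>+ x. A x * Mf f (c * x + Re d) \<partial>lborel))"
      using c by (simp add: mult.assoc[symmetric] ennreal_mult'[symmetric])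
  qed
  then show ?thesis by (simp add: \<psi>_def)
qed


lemma iter_eq:
  "(comp_op (\<lambda>w. of_real a * w + b) ^^ n) f = f \<circ> (\<lambda>w. of_real (a^n) * w + b * of_real (\<Sum>k<n. a^k))"
proof (induction n)
  case 0
  then show ?case by (simp add: fun_eq_iff)
next
  case (Suc n)
  have "(comp_op (\<lambda>w. of_real a * w + b) ^^ Suc n) f = ((comp_op (\<lambda>w. of_real a * w + b) ^^ n) f) \<circ> (\<lambda>w. of_real a * w + b)"
    by (simp add: comp_op_def)
  also have "\<dots> = f \<circ> (\<lambda>w. of_real (a^n) * w + b * of_real (\<Sum>k<n. a^k)) \<circ> (\<lambda>w. of_real a * w + b)"
    by (simp only: Suc)
  finally show ?case
    by (simp add: fun_eq_iff algebra_simps)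
qed

lemma Iw_mono_pos:
  assumes "0 \<le> \<alpha>" "0 \<le> r"
  shows "Iw \<alpha> f r \<le> Iw \<alpha> f 0"
  unfolding Iw_def
proof (rule nn_integral_mono)
  fix x
  have "indicator {r<..} x * (x - r) powr \<alpha> \<le> indicator {0<..} x * (x - 0) powr \<alpha>"
    using assms by (auto simp: indicator_def intro!: powr_mono2)
  then show "ennreal (indicator {r<..} x * (x - r) powr \<alpha>) * Mf f x \<le> ennreal (indicator {0<..} x * (x - 0) powr \<alpha>) * Mf f x"
    by (intro mult_right_mono ennreal_leI) auto
qed

lemma norm_le_bound:
  assumes "bergman_sqnorm \<alpha> g \<le> B" "B < \<infinity>"
  shows "bergman_norm \<alpha> g \<le> ereal (sqrt (enn2real B))"
proof -
  have "bergman_sqnorm \<alpha> g \<noteq> \<infinity>" using assms by auto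
  moreover have "enn2real (bergman_sqnorm \<alpha> g) \<le> enn2real B" using assms by (intro enn2real_mono) auto
  ultimately show ?thesis by (simp add: bergman_norm_def)
qed

lemma norm_ge_bound:
  assumes "ennreal \<delta> \<le> bergman_sqnorm \<alpha> g" "0 \<le> \<delta>"
  shows "ereal (sqrt \<delta>) \<le> bergman_norm \<alpha> g"
proof (cases "bergman_sqnorm \<alpha> g = \<infinity>")
  case True then show ?thesis by (simp add: bergman_norm_def)
next
  case False
  then have "enn2real (ennreal \<delta>) \<le> enn2real (bergman_sqnorm \<alpha> g)" using assms
    by (intro enn2real_mono) (auto simp: top.not_eq_extremum)
  then show ?thesis using False assms by (simp add: bergman_norm_def)
qed

lemma Mf_lower:
  assumes "\<And>y. y \<in> {y0-\<rho>..y0+\<rho>} \<Longrightarrow> c0 \<le> Fsq f (Complex x y)" "0 \<le> c0" "0 \<le> \<rho>"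
  shows "ennreal (c0 * (2*\<rho>)) \<le> Mf f x"
proof -
  have "ennreal (c0 * (2*\<rho>)) = (\<integral>\<^sup>+y. ennreal c0 * indicator {y0-\<rho>..y0+\<rho>} y \<partial>lborel)"
    using assms by (simp add: nn_integral_cmult_indicator ennreal_mult')
  also have "\<dots> \<le> Mf f x" unfolding Mf_def
    using assms(1) by (intro nn_integral_mono) (auto simp: indicator_def ennreal_leI)
  finally show ?thesis .
qed

lemma Iw_lower:
  assumes cont: "continuous_on right_half_plane f" and R: "0 \<le> R" and z0: "Re z0 > R" "f z0 \<noteq> 0"
  shows "\<exists>\<delta>>0. \<forall>r. 0 \<le> r \<and> r \<le> R \<longrightarrow> ennreal \<delta> \<le> Iw \<alpha> f r"
proof -
  have "z0 \<in> right_half_plane" using z0 R by (simp add: right_half_plane_def)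
  then have "isCont f z0" using cont open_rhp continuous_on_eq_continuous_at by blast
  moreover have "cmod (f z0) / 2 > 0" using z0 by simp
  ultimately obtain \<epsilon> where \<epsilon>: "\<epsilon> > 0" "\<And>z. dist z z0 < \<epsilon> \<Longrightarrow> dist (f z) (f z0) < cmod (f z0) / 2"
    unfolding continuous_at_eps_delta by blast
  define \<rho> where "\<rho> = min (\<epsilon>/4) ((Re z0 - R)/2)"
  have \<rho>: "\<rho> > 0" "\<rho> \<le> \<epsilon>/4" "Re z0 - \<rho> > R" using \<epsilon> z0 unfolding \<rho>_def by (auto simp: min_def field_simps)
  define c0 where "c0 = (cmod (f z0) / 2)\<^sup>2"
  have c0: "c0 > 0" using z0 by (simp add: c0_def)
  define m where "m = min ((Re z0 - \<rho> - R) powr \<alpha>) ((Re z0 + \<rho>) powr \<alpha>)"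
  have m: "m > 0" using \<rho> R by (simp add: m_def)
  have Fb: "c0 \<le> Fsq f (Complex x y)" if "x \<in> {Re z0 - \<rho>..Re z0 + \<rho>}" "y \<in> {Im z0 - \<rho>..Im z0 + \<rho>}" for x y
  proof -
    have "dist (Complex x y) z0 \<le> \<bar>x - Re z0\<bar> + \<bar>y - Im z0\<bar>"
      using cmod_le[of "Complex x y - z0"] by (simp add: dist_norm)
    also have "\<dots> \<le> 2 * \<rho>" using that by auto
    also have "\<dots> < \<epsilon>" using \<rho> \<epsilon> by linarith
    finally have "dist (f (Complex x y)) (f z0) < cmod (f z0) / 2" using \<epsilon> by blast
    then have "cmod (f z0) / 2 \<le> cmod (f (Complex x y))"
      by (simp add: dist_norm) (smt (verit) norm_triangle_ineq2 norm_minus_commute)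
    moreover have "x > 0" using that \<rho> R by auto
    ultimately show ?thesis unfolding c0_def Fsq_def using z0
      by (auto intro!: power_mono)
  qed
  have MB: "ennreal (c0 * (2*\<rho>)) \<le> Mf f x" if "x \<in> {Re z0 - \<rho>..Re z0 + \<rho>}" for x
    by (rule Mf_lower[of "Im z0" \<rho>]) (use Fb that c0 \<rho> in auto)
  have "\<forall>r. 0 \<le> r \<and> r \<le> R \<longrightarrow> ennreal ((m * (c0 * (2*\<rho>))) * (2*\<rho>)) \<le> Iw \<alpha> f r"
  proof (intro allI impI)
    fix r assume r: "0 \<le> r \<and> r \<le> R"
    define D where "D = m * (c0 * (2*\<rho>))"
    have D: "D \<ge> 0" using m c0 \<rho> by (simp add: D_def)
    have "(\<integral>\<^sup>+x. ennreal D * indicator {Re z0 - \<rho>..Re z0 + \<rho>} x \<partial>lborel) = ennreal D * ennreal (2*\<rho>)"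
      using \<rho> by (subst nn_integral_cmult_indicator) auto
    also have "\<dots> = ennreal (D * (2*\<rho>))" using D \<rho> by (simp add: ennreal_mult)
    finally have "ennreal ((m * (c0 * (2*\<rho>))) * (2*\<rho>)) = (\<integral>\<^sup>+x. ennreal (m * (c0 * (2*\<rho>))) * indicator {Re z0 - \<rho>..Re z0 + \<rho>} x \<partial>lborel)"
      unfolding D_def by simp
    also have "\<dots> \<le> Iw \<alpha> f r" unfolding Iw_def
    proof (intro nn_integral_mono)
      fix x
      show "ennreal (m * (c0 * (2*\<rho>))) * indicator {Re z0 - \<rho>..Re z0 + \<rho>} x \<le> ennreal (indicator {r<..} x * (x - r) powr \<alpha>) * Mf f x"
      proof (cases "x \<in> {Re z0 - \<rho>..Re z0 + \<rho>}")
        case True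
        then have xr: "x > r" using r \<rho> by auto
        have "m \<le> (x - r) powr \<alpha>"
        proof (cases "\<alpha> \<ge> 0")
          case True
          then have "(Re z0 - \<rho> - R) powr \<alpha> \<le> (x - r) powr \<alpha>"
            using \<open>x \<in> _\<close> r \<rho> by (intro powr_mono2) auto
          then show ?thesis unfolding m_def by linarith
        next
          case False
          then have "(Re z0 + \<rho>) powr \<alpha> \<le> (x - r) powr \<alpha>"
            using \<open>x \<in> _\<close> r \<rho> xr by (intro powr_mono2') auto
          then show ?thesis unfolding m_def by linarith
        qed
        then have "ennreal m * ennreal (c0 * (2*\<rho>)) \<le> ennreal ((x - r) powr \<alpha>) * Mf f x"
          using MB[OF True] by (intro mult_mono) (auto simp: ennreal_leI)
        then show ?thesis using True xr m c0 \<rho> by (simp add: ennreal_mult')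
      qed simp
    qed
    finally show "ennreal ((m * (c0 * (2*\<rho>))) * (2*\<rho>)) \<le> Iw \<alpha> f r" .
  qed
  moreover have "(m * (c0 * (2*\<rho>))) * (2*\<rho>) > 0" using m c0 \<rho> by simp
  ultimately show ?thesis by blast
qed

lemma powr_ge1_neg: "0 < x \<Longrightarrow> x \<le> 1 \<Longrightarrow> e \<le> 0 \<Longrightarrow> 1 \<le> x powr (e::real)"
  using powr_mono2'[of e x 1] by simp

lemma powr_le1_neg: "1 \<le> x \<Longrightarrow> e \<le> 0 \<Longrightarrow> x powr (e::real) \<le> 1"
  using powr_mono2'[of e 1 x] by simp




definition Gn :: "(complex \<Rightarrow> complex) \<Rightarrow> complex \<Rightarrow> real" where
  "Gn g z = (if Re z > 0 then cmod (g z) else 0)"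

lemma EPA:
  fixes B :: "real \<Rightarrow> ennreal"
  assumes [measurable]: "B \<in> borel_measurable borel" and ab: "a < b"
  shows "\<exists>t\<in>{a..b}. B t * ennreal (b - a) \<le> (\<integral>\<^sup>+u. indicator {a..b} u * B u \<partial>lborel)"
proof (rule ccontr)
  assume "\<not> ?thesis"
  then have lt: "\<And>t. t \<in> {a..b} \<Longrightarrow> (\<integral>\<^sup>+u. indicator {a..b} u * B u \<partial>lborel) < B t * ennreal (b - a)"
    by (auto simp: not_le)
  define A where "A = (\<integral>\<^sup>+u. indicator {a..b} u * B u \<partial>lborel)"
  have Afin: "A \<noteq> \<infinity>" using lt[of a] ab unfolding A_def by auto
  then obtain \<alpha> where \<alpha>: "A = ennreal \<alpha>" "0 \<le> \<alpha>" by (cases A) auto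
  define c where "c = \<alpha> / (b - a)"
  have c0: "c \<ge> 0" using \<alpha> ab by (simp add: c_def)
  have ct: "ennreal c < B t" if "t \<in> {a..b}" for t
  proof (cases "B t")
    case (real \<beta>)
    then have "\<alpha> < \<beta> * (b - a)" using lt[OF that] \<alpha> ab unfolding A_def
      by (simp add: ennreal_mult'[symmetric] ennreal_less_iff)
    then have "c < \<beta>" using ab by (simp add: c_def divide_less_eq)
    then show ?thesis using real c0 by (simp add: ennreal_less_iff)
  qed simp
  have "(\<integral>\<^sup>+u. ennreal c * indicator {a..b} u \<partial>lborel) < (\<integral>\<^sup>+u. indicator {a..b} u * B u \<partial>lborel)"
  proof (rule nn_integral_less)
    show "(\<integral>\<^sup>+u. ennreal c * indicator {a..b} u \<partial>lborel) \<noteq> \<infinity>" using ab by (simp add: nn_integral_cmult_indicator ennreal_mult_eq_top_iff)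
    show "AE x in lborel. ennreal c * indicator {a..b} x \<le> indicator {a..b} x * B x"
      using ct by (auto simp: indicator_def less_imp_le)
    show "\<not> (AE x in lborel. indicator {a..b} x * B x \<le> ennreal c * indicator {a..b} x)"
    proof
      assume "AE x in lborel. indicator {a..b} x * B x \<le> ennreal c * indicator {a..b} x"
      then have "AE x in lborel. x \<notin> {a..b}"
        by eventually_elim (use ct in \<open>force simp: indicator_def not_le\<close>)
      then have "{x\<in>space lborel. \<not> x \<notin> {a..b}} \<in> null_sets lborel"
        by (subst (asm) AE_iff_null) auto
      then have "emeasure lborel {x. a \<le> x \<and> x \<le> b} = 0" by (auto simp: null_sets_def)
      moreover have "{x. a \<le> x \<and> x \<le> b} = {a..b}" by auto
      ultimately show False using ab by simp
    qed
  qed simp_all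
  moreover have "(\<integral>\<^sup>+u. ennreal c * indicator {a..b} u \<partial>lborel) = A"
    using ab \<alpha> by (simp add: nn_integral_cmult_indicator c_def ennreal_mult'[symmetric])
  ultimately show False unfolding A_def by simp
qed

lemma SEG:
  assumes cont: "continuous_on right_half_plane g" and seg: "closed_segment a b \<subseteq> right_half_plane"
    and dist: "\<And>w. w \<in> closed_segment a b \<Longrightarrow> h/2 \<le> cmod (w - z)" and h: "h > 0"
  shows "ennreal (cmod (contour_integral (linepath a b) (\<lambda>w. g w / (w - z))))
     \<le> ennreal (2/h * cmod (b - a)) * (\<integral>\<^sup>+t. indicator {0..1} t * ennreal (Gn g (linepath a b t)) \<partial>lborel)"
proof -
  define k where "k = (\<lambda>t. g (linepath a b t) / (linepath a b t - z) * (b - a))"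
  define q where "q = (\<lambda>t. 2/h * cmod (b - a) * cmod (g (linepath a b t)))"
  have inseg: "t \<in> {0..1} \<Longrightarrow> linepath a b t \<in> closed_segment a b" for t by (rule linepath_in_path)
  have nz: "t \<in> {0..1} \<Longrightarrow> linepath a b t - z \<noteq> 0" for t
    using dist[OF inseg, of t] h by auto
  have cg: "continuous_on {0..1} (\<lambda>t. g (linepath a b t))"
    by (rule continuous_on_compose2[OF cont continuous_on_linepath]) (use inseg seg in auto)
  have ck: "continuous_on {0..1} k" unfolding k_def
    by (intro continuous_intros cg) (use nz in auto)
  have cq: "continuous_on {0..1} q" unfolding q_def by (intro continuous_intros cg)
  have ci: "contour_integral (linepath a b) (\<lambda>w. g w / (w - z)) = integral {0..1} k"
    unfolding contour_integral_integral k_def by simp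
  have "norm (integral {0..1} k) \<le> integral {0..1} q"
  proof (rule integral_norm_bound_integral)
    show "k integrable_on {0..1}" using ck by (rule integrable_continuous_real)
    show "q integrable_on {0..1}" using cq by (rule integrable_continuous_real)
    fix t :: real assume t: "t \<in> {0..1}"
    have "norm (k t) = cmod (g (linepath a b t)) / cmod (linepath a b t - z) * cmod (b - a)"
      unfolding k_def by (simp add: norm_mult norm_divide)
    also have "\<dots> \<le> cmod (g (linepath a b t)) / (h/2) * cmod (b - a)"
    proof -
      have "h/2 \<le> cmod (linepath a b t - z)" using dist[OF inseg[OF t]] .
      moreover have "0 < h/2" using h by simp
      ultimately have "0 < cmod (linepath a b t - z)" by linarith
      with \<open>h/2 \<le> _\<close> \<open>0 < h/2\<close> show ?thesis
        by (intro mult_right_mono divide_left_mono) (auto intro: mult_pos_pos)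
    qed
    also have "\<dots> = q t" unfolding q_def by simp
    finally show "norm (k t) \<le> q t" .
  qed
  then have "ennreal (cmod (contour_integral (linepath a b) (\<lambda>w. g w / (w - z)))) \<le> ennreal (integral {0..1} q)"
    unfolding ci by (rule ennreal_leI)
  also have "ennreal (integral {0..1} q) = (\<integral>\<^sup>+t. ennreal (indicator {0..1} t * q t) \<partial>lborel)"
  proof -
    have "(q has_integral integral {0..1} q) {0..1}" using integrable_continuous_real[OF cq] by (rule integrable_integral)
    moreover have "\<And>t. t \<in> {0..1} \<Longrightarrow> 0 \<le> q t" using h by (simp add: q_def)
    ultimately show ?thesis using nn_integral_has_integral_lebesgue[of "{0..1}" q] by simp
  qed
  also have "\<dots> = (\<integral>\<^sup>+t. ennreal (2/h * cmod (b - a)) * (indicator {0..1} t * ennreal (Gn g (linepath a b t))) \<partial>lborel)"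
  proof (intro nn_integral_cong)
    fix t
    show "ennreal (indicator {0..1} t * q t) = ennreal (2/h * cmod (b - a)) * (indicator {0..1} t * ennreal (Gn g (linepath a b t)))"
    proof (cases "t \<in> {0..1}")
      case True
      then have "Re (linepath a b t) > 0" using inseg seg by (auto simp: right_half_plane_def)
      moreover have "2 * cmod (b - a) * cmod (g (linepath a b t)) / h = (2 * cmod (b - a) / h) * cmod (g (linepath a b t))" by simp
      ultimately show ?thesis using True h by (simp add: q_def Gn_def ennreal_mult' del: times_divide_eq_left)
    qed simp
  qed
  also have "\<dots> = ennreal (2/h * cmod (b - a)) * (\<integral>\<^sup>+t. indicator {0..1} t * ennreal (Gn g (linepath a b t)) \<partial>lborel)"
  proof (rule nn_integral_cmult)
    have "(\<lambda>t. indicator {0..1} t *\<^sub>R Gn g (linepath a b t)) \<in> borel_measurable borel"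
    proof (rule borel_measurable_continuous_on_indicator)
      show "continuous_on {0..1} (\<lambda>t. Gn g (linepath a b t))"
      proof (rule continuous_on_eq[OF continuous_on_norm[OF cg]])
        fix t :: real assume "t \<in> {0..1}"
        then have "Re (linepath a b t) > 0" using inseg seg by (auto simp: right_half_plane_def)
        then show "cmod (g (linepath a b t)) = Gn g (linepath a b t)" by (simp add: Gn_def)
      qed
    qed simp
    then have "(\<lambda>t. ennreal (indicator {0..1} t * Gn g (linepath a b t))) \<in> borel_measurable borel" by simp
    moreover have "(\<lambda>t. ennreal (indicator {0..1} t * Gn g (linepath a b t))) = (\<lambda>t. indicator {0..1} t * ennreal (Gn g (linepath a b t)))"
      by (auto simp: indicator_def fun_eq_iff)
    ultimately show "(\<lambda>t. indicator {0..1} t * ennreal (Gn g (linepath a b t))) \<in> borel_measurable lborel"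
      by simp
  qed
  finally show ?thesis .
qed


lemma Gn_measurable[measurable]:
  assumes "continuous_on right_half_plane g"
  shows "Gn g \<in> borel_measurable borel"
proof -
  have "Gn g = (\<lambda>z. indicator right_half_plane z *\<^sub>R cmod (g z))"
    by (auto simp: Gn_def right_half_plane_def indicator_def fun_eq_iff)
  moreover have "continuous_on right_half_plane (\<lambda>z. cmod (g z))"
    by (intro continuous_intros assms)
  moreover have "right_half_plane \<in> sets borel" using open_rhp by simp
  ultimately show ?thesis
    using borel_measurable_continuous_on_indicator[of right_half_plane "\<lambda>z. cmod (g z)"] by simp
qed

lemma measurable_Complex[measurable (raw)]:
  "f \<in> borel_measurable M \<Longrightarrow> g \<in> borel_measurable M \<Longrightarrow> (\<lambda>x. Complex (f x) (g x)) \<in> borel_measurable M"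
  by (subst borel_measurable_complex_iff) simp

lemma affine_sub:
  fixes F :: "real \<Rightarrow> ennreal"
  assumes [measurable]: "F \<in> borel_measurable borel" and u: "u1 < u2"
  shows "ennreal (u2 - u1) * (\<integral>\<^sup>+t. indicator {0..1} t * F (u1 + t * (u2 - u1)) \<partial>lborel)
       = (\<integral>\<^sup>+s. indicator {u1..u2} s * F s \<partial>lborel)"
proof -
  have m: "(\<lambda>s. indicator {u1..u2} s * F s) \<in> borel_measurable borel" by measurable
  have "(\<integral>\<^sup>+s. indicator {u1..u2} s * F s \<partial>lborel)
      = ennreal \<bar>u2 - u1\<bar> * (\<integral>\<^sup>+t. indicator {u1..u2} (u1 + (u2 - u1) * t) * F (u1 + (u2 - u1) * t) \<partial>lborel)"
    using nn_integral_real_affine[OF m, of "u2 - u1" u1] u by simp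
  also have "\<dots> = ennreal (u2 - u1) * (\<integral>\<^sup>+t. indicator {0..1} t * F (u1 + t * (u2 - u1)) \<partial>lborel)"
  proof -
    have "indicator {u1..u2} (u1 + (u2 - u1) * t) = (indicator {0..1} t :: ennreal)" for t
    proof -
      have c: "0 < u2 - u1" using u by simp
      have "u1 \<le> u1 + (u2 - u1) * t \<longleftrightarrow> (u2 - u1) * 0 \<le> (u2 - u1) * t" by simp
      also have "\<dots> \<longleftrightarrow> 0 \<le> t" by (rule mult_le_cancel_left_pos[OF c])
      finally have 1: "u1 \<le> u1 + (u2 - u1) * t \<longleftrightarrow> 0 \<le> t" .
      have "u1 + (u2 - u1) * t \<le> u2 \<longleftrightarrow> (u2 - u1) * t \<le> (u2 - u1) * 1" by (simp add: algebra_simps)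
      also have "\<dots> \<longleftrightarrow> t \<le> 1" by (rule mult_le_cancel_left_pos[OF c])
      finally have 2: "u1 + (u2 - u1) * t \<le> u2 \<longleftrightarrow> t \<le> 1" .
      show ?thesis using 1 2 by (simp add: indicator_def)
    qed
    then show ?thesis using u by (simp add: mult.commute)
  qed
  finally show ?thesis by simp
qed

lemma HSEG:
  assumes cont: "continuous_on right_half_plane g" and h: "h > 0"
    and u: "u1 < u2" "0 < u1" "x - h \<le> u1" "u2 \<le> x + h" and yy: "h/2 \<le> \<bar>yy - y\<bar>"
  shows "ennreal (cmod (contour_integral (linepath (Complex u1 yy) (Complex u2 yy)) (\<lambda>w. g w / (w - Complex x y))))
     \<le> ennreal (2/h) * (\<integral>\<^sup>+s. indicator {x-h..x+h} s * ennreal (Gn g (Complex s yy)) \<partial>lborel)"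
proof -
  let ?a = "Complex u1 yy" and ?b = "Complex u2 yy"
  have segeq: "closed_segment ?a ?b = {w. Im w = yy \<and> Re w \<in> {u1..u2}}"
    using u by (simp add: closed_segment_same_Im closed_segment_eq_real_ivl)
  have seg: "closed_segment ?a ?b \<subseteq> right_half_plane"
    using u unfolding segeq by (auto simp: right_half_plane_def)
  have dist: "h/2 \<le> cmod (w - Complex x y)" if "w \<in> closed_segment ?a ?b" for w
  proof -
    have "\<bar>Im (w - Complex x y)\<bar> \<le> cmod (w - Complex x y)" by (rule abs_Im_le_cmod)
    then show ?thesis using that yy unfolding segeq by auto
  qed
  have lp: "linepath ?a ?b t = Complex (u1 + t * (u2 - u1)) yy" for t
    by (simp add: linepath_def complex_eq_iff algebra_simps)
  have ba: "cmod (?b - ?a) = u2 - u1" using u by (simp add: cmod_def)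
  have mG: "(\<lambda>s. ennreal (Gn g (Complex s yy))) \<in> borel_measurable borel"
    using Gn_measurable[OF cont] by measurable
  have "ennreal (cmod (contour_integral (linepath ?a ?b) (\<lambda>w. g w / (w - Complex x y))))
     \<le> ennreal (2/h * cmod (?b - ?a)) * (\<integral>\<^sup>+t. indicator {0..1} t * ennreal (Gn g (linepath ?a ?b t)) \<partial>lborel)"
    by (rule SEG[OF cont seg dist h])
  also have "\<dots> = ennreal (2/h) * (ennreal (u2 - u1) * (\<integral>\<^sup>+t. indicator {0..1} t * ennreal (Gn g (Complex (u1 + t * (u2 - u1)) yy)) \<partial>lborel))"
  proof -
    have "ennreal (2/h * (u2 - u1)) = ennreal (2/h) * ennreal (u2 - u1)" using h u by (intro ennreal_mult) auto
    then show ?thesis unfolding ba lp by (simp only: mult.assoc)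
  qed
  also have "\<dots> = ennreal (2/h) * (\<integral>\<^sup>+s. indicator {u1..u2} s * ennreal (Gn g (Complex s yy)) \<partial>lborel)"
    using affine_sub[OF mG u(1)] by simp
  also have "\<dots> \<le> ennreal (2/h) * (\<integral>\<^sup>+s. indicator {x-h..x+h} s * ennreal (Gn g (Complex s yy)) \<partial>lborel)"
    using u by (intro mult_left_mono nn_integral_mono) (auto simp: indicator_def)
  finally show ?thesis .
qed

lemma VSEG:
  assumes cont: "continuous_on right_half_plane g" and h: "h > 0"
    and v: "v1 < v2" "y - h \<le> v1" "v2 \<le> y + h" and xx: "h/2 \<le> \<bar>xx - x\<bar>" "0 < xx"
  shows "ennreal (cmod (contour_integral (linepath (Complex xx v1) (Complex xx v2)) (\<lambda>w. g w / (w - Complex x y))))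
     \<le> ennreal (2/h) * (\<integral>\<^sup>+t. indicator {y-h..y+h} t * ennreal (Gn g (Complex xx t)) \<partial>lborel)"
proof -
  let ?a = "Complex xx v1" and ?b = "Complex xx v2"
  have segeq: "closed_segment ?a ?b = {w. Re w = xx \<and> Im w \<in> {v1..v2}}"
    using v by (simp add: closed_segment_same_Re closed_segment_eq_real_ivl)
  have seg: "closed_segment ?a ?b \<subseteq> right_half_plane"
    using xx unfolding segeq by (auto simp: right_half_plane_def)
  have dist: "h/2 \<le> cmod (w - Complex x y)" if "w \<in> closed_segment ?a ?b" for w
  proof -
    have "\<bar>Re (w - Complex x y)\<bar> \<le> cmod (w - Complex x y)" by (rule abs_Re_le_cmod)
    then show ?thesis using that xx unfolding segeq by auto
  qed
  have lp: "linepath ?a ?b t = Complex xx (v1 + t * (v2 - v1))" for t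
    by (simp add: linepath_def complex_eq_iff algebra_simps)
  have ba: "cmod (?b - ?a) = v2 - v1" using v by (simp add: cmod_def)
  have mG: "(\<lambda>t. ennreal (Gn g (Complex xx t))) \<in> borel_measurable borel"
    using Gn_measurable[OF cont] by measurable
  have "ennreal (cmod (contour_integral (linepath ?a ?b) (\<lambda>w. g w / (w - Complex x y))))
     \<le> ennreal (2/h * cmod (?b - ?a)) * (\<integral>\<^sup>+t. indicator {0..1} t * ennreal (Gn g (linepath ?a ?b t)) \<partial>lborel)"
    by (rule SEG[OF cont seg dist h])
  also have "\<dots> = ennreal (2/h) * (ennreal (v2 - v1) * (\<integral>\<^sup>+t. indicator {0..1} t * ennreal (Gn g (Complex xx (v1 + t * (v2 - v1)))) \<partial>lborel))"
  proof -
    have "ennreal (2/h * (v2 - v1)) = ennreal (2/h) * ennreal (v2 - v1)" using h v by (intro ennreal_mult) auto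
    then show ?thesis unfolding ba lp by (simp only: mult.assoc)
  qed
  also have "\<dots> = ennreal (2/h) * (\<integral>\<^sup>+t. indicator {v1..v2} t * ennreal (Gn g (Complex xx t)) \<partial>lborel)"
    using affine_sub[OF mG v(1)] by simp
  also have "\<dots> \<le> ennreal (2/h) * (\<integral>\<^sup>+t. indicator {y-h..y+h} t * ennreal (Gn g (Complex xx t)) \<partial>lborel)"
    using v by (intro mult_left_mono nn_integral_mono) (auto simp: indicator_def)
  finally show ?thesis .
qed


lemma norm4: "cmod (A + B + - C + - D) \<le> cmod A + cmod B + cmod C + cmod D"
  using norm_triangle_ineq[of "A+B+-C" "-D"] norm_triangle_ineq[of "A+B" "-C"] norm_triangle_ineq[of A B] by simp

lemma RECT:
  assumes holo: "g holomorphic_on right_half_plane" and h: "0 < h" "h < x"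
    and x1: "x - h \<le> x1" "x1 \<le> x - h/2" and x2: "x + h/2 \<le> x2" "x2 \<le> x + h"
    and y1: "y - h \<le> y1" "y1 \<le> y - h/2" and y2: "y + h/2 \<le> y2" "y2 \<le> y + h"
  shows "ennreal (2 * pi * cmod (g (Complex x y))) \<le> ennreal (2/h) *
     ((\<integral>\<^sup>+s. indicator {x-h..x+h} s * ennreal (Gn g (Complex s y1)) \<partial>lborel)
    + (\<integral>\<^sup>+s. indicator {x-h..x+h} s * ennreal (Gn g (Complex s y2)) \<partial>lborel)
    + (\<integral>\<^sup>+t. indicator {y-h..y+h} t * ennreal (Gn g (Complex x1 t)) \<partial>lborel)
    + (\<integral>\<^sup>+t. indicator {y-h..y+h} t * ennreal (Gn g (Complex x2 t)) \<partial>lborel))"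
proof -
  have cont: "continuous_on right_half_plane g" using holo holomorphic_on_imp_continuous_on by blast
  define z where "z = Complex x y"
  define a1 where "a1 = Complex x1 y1"
  define a2 where "a2 = Complex x2 y1"
  define a3 where "a3 = Complex x2 y2"
  define a4 where "a4 = Complex x1 y2"
  define k where "k = (\<lambda>w. g w / (w - z))"
  have rp: "rectpath a1 a3 = linepath a1 a2 +++ linepath a2 a3 +++ linepath a3 a4 +++ linepath a4 a1"
    by (simp add: rectpath_def Let_def a1_def a2_def a3_def a4_def)
  have zbox: "z \<in> box a1 a3" using h x1 x2 y1 y2 by (simp add: z_def a1_def a3_def in_box_complex_iff)
  have le13: "Re a1 \<le> Re a3" "Im a1 \<le> Im a3" using h x1 x2 y1 y2 by (auto simp: a1_def a3_def)
  have PI: "path_image (rectpath a1 a3) \<subseteq> right_half_plane - {z}"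
  proof
    fix w assume "w \<in> path_image (rectpath a1 a3)"
    then have "w \<in> cbox a1 a3 - box a1 a3" using path_image_rectpath_cbox_minus_box[OF le13] by simp
    then show "w \<in> right_half_plane - {z}" using zbox h x1
      by (auto simp: in_cbox_complex_iff right_half_plane_def a1_def)
  qed
  have "(k has_contour_integral (2 * pi * \<i> * winding_number (rectpath a1 a3) z * g z)) (rectpath a1 a3)"
    unfolding k_def
  proof (rule Cauchy_integral_formula_convex_simple[OF _ holo])
    show "convex right_half_plane" unfolding right_half_plane_def by (rule convex_halfspace_Re_gt)
    show "z \<in> interior right_half_plane" using PI zbox open_rhp h
      by (simp add: interior_open right_half_plane_def z_def)
  qed (use PI in auto)
  then have CI: "contour_integral (rectpath a1 a3) k = 2 * pi * \<i> * g z"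
    using winding_number_rectpath[OF zbox] by (simp add: contour_integral_unique)
  have kc: "continuous_on (right_half_plane - {z}) k" unfolding k_def
    by (intro continuous_intros continuous_on_subset[OF cont]) auto
  have pis: "path_image (linepath a1 a2) \<subseteq> path_image (rectpath a1 a3)"
            "path_image (linepath a2 a3) \<subseteq> path_image (rectpath a1 a3)"
            "path_image (linepath a3 a4) \<subseteq> path_image (rectpath a1 a3)"
            "path_image (linepath a4 a1) \<subseteq> path_image (rectpath a1 a3)"
    unfolding rp by (auto simp: path_image_join)
  have ci: "k contour_integrable_on linepath a1 a2" "k contour_integrable_on linepath a2 a3"
           "k contour_integrable_on linepath a3 a4" "k contour_integrable_on linepath a4 a1"
    using pis PI by (auto intro!: contour_integrable_continuous_linepath continuous_on_subset[OF kc])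
  have sum: "contour_integral (rectpath a1 a3) k = contour_integral (linepath a1 a2) k + contour_integral (linepath a2 a3) k
      + contour_integral (linepath a3 a4) k + contour_integral (linepath a4 a1) k"
    unfolding rp using ci by (simp add: contour_integrable_joinI)
  have r3: "contour_integral (linepath a3 a4) k = - contour_integral (linepath a4 a3) k"
    using contour_integral_reversepath[of "linepath a4 a3" k] by simp
  have r4: "contour_integral (linepath a4 a1) k = - contour_integral (linepath a1 a4) k"
    using contour_integral_reversepath[of "linepath a1 a4" k] by simp
  have "2 * pi * cmod (g z) = cmod (contour_integral (rectpath a1 a3) k)"
    unfolding CI by (simp add: norm_mult)
  also have "\<dots> \<le> cmod (contour_integral (linepath a1 a2) k) + cmod (contour_integral (linepath a2 a3) k)
      + cmod (contour_integral (linepath a4 a3) k) + cmod (contour_integral (linepath a1 a4) k)"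
    unfolding sum r3 r4 by (rule norm4)
  finally have "ennreal (2 * pi * cmod (g z)) \<le> ennreal (cmod (contour_integral (linepath a1 a2) k))
      + ennreal (cmod (contour_integral (linepath a2 a3) k))
      + ennreal (cmod (contour_integral (linepath a4 a3) k)) + ennreal (cmod (contour_integral (linepath a1 a4) k))"
    by (simp add: ennreal_plus[symmetric] del: ennreal_plus)
  also have "\<dots> \<le> ennreal (2/h) * (\<integral>\<^sup>+s. indicator {x-h..x+h} s * ennreal (Gn g (Complex s y1)) \<partial>lborel)
      + ennreal (2/h) * (\<integral>\<^sup>+t. indicator {y-h..y+h} t * ennreal (Gn g (Complex x2 t)) \<partial>lborel)
      + ennreal (2/h) * (\<integral>\<^sup>+s. indicator {x-h..x+h} s * ennreal (Gn g (Complex s y2)) \<partial>lborel)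
      + ennreal (2/h) * (\<integral>\<^sup>+t. indicator {y-h..y+h} t * ennreal (Gn g (Complex x1 t)) \<partial>lborel)"
  proof (intro add_mono)
    show "ennreal (cmod (contour_integral (linepath a1 a2) k)) \<le> ennreal (2/h) * (\<integral>\<^sup>+s. indicator {x-h..x+h} s * ennreal (Gn g (Complex s y1)) \<partial>lborel)"
      unfolding a1_def a2_def k_def z_def using h x1 x2 y1 by (intro HSEG[OF cont]) auto
    show "ennreal (cmod (contour_integral (linepath a4 a3) k)) \<le> ennreal (2/h) * (\<integral>\<^sup>+s. indicator {x-h..x+h} s * ennreal (Gn g (Complex s y2)) \<partial>lborel)"
      unfolding a4_def a3_def k_def z_def using h x1 x2 y2 by (intro HSEG[OF cont]) auto
    show "ennreal (cmod (contour_integral (linepath a2 a3) k)) \<le> ennreal (2/h) * (\<integral>\<^sup>+t. indicator {y-h..y+h} t * ennreal (Gn g (Complex x2 t)) \<partial>lborel)"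
      unfolding a2_def a3_def k_def z_def using h x1 x2 y1 y2 by (intro VSEG[OF cont]) auto
    show "ennreal (cmod (contour_integral (linepath a1 a4) k)) \<le> ennreal (2/h) * (\<integral>\<^sup>+t. indicator {y-h..y+h} t * ennreal (Gn g (Complex x1 t)) \<partial>lborel)"
      unfolding a1_def a4_def k_def z_def using h x1 x2 y1 y2 by (intro VSEG[OF cont]) auto
  qed
  finally show ?thesis unfolding z_def by (simp add: distrib_left add_ac)
qed


lemma SMV:
  assumes holo: "g holomorphic_on right_half_plane" and h: "0 < h" "h < x"
  shows "ennreal (cmod (g (Complex x y))) \<le> ennreal (8 / (pi * h\<^sup>2)) *
     (\<integral>\<^sup>+s. indicator {x-h..x+h} s * (\<integral>\<^sup>+t. indicator {y-h..y+h} t * ennreal (Gn g (Complex s t)) \<partial>lborel) \<partial>lborel)"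
proof -
  have cont: "continuous_on right_half_plane g" using holo holomorphic_on_imp_continuous_on by blast
  note [measurable] = Gn_measurable[OF cont]
  define Box where "Box = (\<integral>\<^sup>+s. indicator {x-h..x+h} s * (\<integral>\<^sup>+t. indicator {y-h..y+h} t * ennreal (Gn g (Complex s t)) \<partial>lborel) \<partial>lborel)"
  define Hb where "Hb = (\<lambda>yy. \<integral>\<^sup>+s. indicator {x-h..x+h} s * ennreal (Gn g (Complex s yy)) \<partial>lborel)"
  define Hv where "Hv = (\<lambda>xx. \<integral>\<^sup>+t. indicator {y-h..y+h} t * ennreal (Gn g (Complex xx t)) \<partial>lborel)"
  have mHb: "Hb \<in> borel_measurable borel" unfolding Hb_def by measurable
  have mHv: "Hv \<in> borel_measurable borel" unfolding Hv_def by measurable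
  have Bb: "(\<integral>\<^sup>+u. indicator {y-h..y+h} u * Hb u \<partial>lborel) = Box"
  proof -
    have "(\<integral>\<^sup>+u. indicator {y-h..y+h} u * Hb u \<partial>lborel)
        = (\<integral>\<^sup>+u. (\<integral>\<^sup>+s. indicator {y-h..y+h} u * (indicator {x-h..x+h} s * ennreal (Gn g (Complex s u))) \<partial>lborel) \<partial>lborel)"
      unfolding Hb_def by (intro nn_integral_cong nn_integral_cmult[symmetric]) measurable
    also have "\<dots> = (\<integral>\<^sup>+s. (\<integral>\<^sup>+u. indicator {y-h..y+h} u * (indicator {x-h..x+h} s * ennreal (Gn g (Complex s u))) \<partial>lborel) \<partial>lborel)"
      by (rule lborel_pair.Fubini') measurable
    also have "\<dots> = Box" unfolding Box_def
    proof (intro nn_integral_cong)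
      fix s
      have "(\<integral>\<^sup>+u. indicator {y-h..y+h} u * (indicator {x-h..x+h} s * ennreal (Gn g (Complex s u))) \<partial>lborel)
          = (\<integral>\<^sup>+u. indicator {x-h..x+h} s * (indicator {y-h..y+h} u * ennreal (Gn g (Complex s u))) \<partial>lborel)"
        by (simp add: mult.left_commute)
      also have "\<dots> = indicator {x-h..x+h} s * (\<integral>\<^sup>+u. indicator {y-h..y+h} u * ennreal (Gn g (Complex s u)) \<partial>lborel)"
        by (rule nn_integral_cmult) measurable
      finally show "(\<integral>\<^sup>+u. indicator {y-h..y+h} u * (indicator {x-h..x+h} s * ennreal (Gn g (Complex s u))) \<partial>lborel)
          = indicator {x-h..x+h} s * (\<integral>\<^sup>+t. indicator {y-h..y+h} t * ennreal (Gn g (Complex s t)) \<partial>lborel)" .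
    qed
    finally show ?thesis .
  qed
  have Bv: "(\<integral>\<^sup>+u. indicator {x-h..x+h} u * Hv u \<partial>lborel) = Box" unfolding Hv_def Box_def ..
  have hh: "h/2 > 0" using h by simp
  obtain y1 where y1: "y1 \<in> {y-h..y-h/2}" "Hb y1 * ennreal (h/2) \<le> Box"
  proof -
    obtain t where t: "t \<in> {y-h..y-h/2}" "Hb t * ennreal ((y-h/2) - (y-h)) \<le> (\<integral>\<^sup>+u. indicator {y-h..y-h/2} u * Hb u \<partial>lborel)"
      using EPA[OF mHb, of "y-h" "y-h/2"] h by auto
    have "(\<integral>\<^sup>+u. indicator {y-h..y-h/2} u * Hb u \<partial>lborel) \<le> (\<integral>\<^sup>+u. indicator {y-h..y+h} u * Hb u \<partial>lborel)"
      using h by (intro nn_integral_mono mult_right_mono) (auto simp: indicator_def)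
    then show ?thesis using that[of t] t Bb by (simp add: algebra_simps)
  qed
  obtain y2 where y2: "y2 \<in> {y+h/2..y+h}" "Hb y2 * ennreal (h/2) \<le> Box"
  proof -
    obtain t where t: "t \<in> {y+h/2..y+h}" "Hb t * ennreal ((y+h) - (y+h/2)) \<le> (\<integral>\<^sup>+u. indicator {y+h/2..y+h} u * Hb u \<partial>lborel)"
      using EPA[OF mHb, of "y+h/2" "y+h"] h by auto
    have "(\<integral>\<^sup>+u. indicator {y+h/2..y+h} u * Hb u \<partial>lborel) \<le> (\<integral>\<^sup>+u. indicator {y-h..y+h} u * Hb u \<partial>lborel)"
      using h by (intro nn_integral_mono mult_right_mono) (auto simp: indicator_def)
    then show ?thesis using that[of t] t Bb by (simp add: algebra_simps)
  qed
  obtain x1 where x1: "x1 \<in> {x-h..x-h/2}" "Hv x1 * ennreal (h/2) \<le> Box"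
  proof -
    obtain t where t: "t \<in> {x-h..x-h/2}" "Hv t * ennreal ((x-h/2) - (x-h)) \<le> (\<integral>\<^sup>+u. indicator {x-h..x-h/2} u * Hv u \<partial>lborel)"
      using EPA[OF mHv, of "x-h" "x-h/2"] h by auto
    have "(\<integral>\<^sup>+u. indicator {x-h..x-h/2} u * Hv u \<partial>lborel) \<le> (\<integral>\<^sup>+u. indicator {x-h..x+h} u * Hv u \<partial>lborel)"
      using h by (intro nn_integral_mono mult_right_mono) (auto simp: indicator_def)
    then show ?thesis using that[of t] t Bv by (simp add: algebra_simps)
  qed
  obtain x2 where x2: "x2 \<in> {x+h/2..x+h}" "Hv x2 * ennreal (h/2) \<le> Box"
  proof -
    obtain t where t: "t \<in> {x+h/2..x+h}" "Hv t * ennreal ((x+h) - (x+h/2)) \<le> (\<integral>\<^sup>+u. indicator {x+h/2..x+h} u * Hv u \<partial>lborel)"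
      using EPA[OF mHv, of "x+h/2" "x+h"] h by auto
    have "(\<integral>\<^sup>+u. indicator {x+h/2..x+h} u * Hv u \<partial>lborel) \<le> (\<integral>\<^sup>+u. indicator {x-h..x+h} u * Hv u \<partial>lborel)"
      using h by (intro nn_integral_mono mult_right_mono) (auto simp: indicator_def)
    then show ?thesis using that[of t] t Bv by (simp add: algebra_simps)
  qed
  define S where "S = Hb y1 + Hb y2 + Hv x1 + Hv x2"
  have R: "ennreal (2 * pi * cmod (g (Complex x y))) \<le> ennreal (2/h) * S"
    unfolding S_def Hb_def Hv_def using x1 x2 y1 y2 h by (intro RECT[OF holo]) auto
  have S2: "S * ennreal (h/2) \<le> 4 * Box"
  proof -
    have "S * ennreal (h/2) = Hb y1 * ennreal (h/2) + Hb y2 * ennreal (h/2) + Hv x1 * ennreal (h/2) + Hv x2 * ennreal (h/2)"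
      unfolding S_def by (simp add: distrib_right)
    also have "\<dots> \<le> Box + Box + Box + Box" using x1 x2 y1 y2 by (intro add_mono) auto
    also have "\<dots> = 4 * Box"
    proof -
      have "(4::ennreal) = 1 + 1 + 1 + 1" by simp
      then show ?thesis by (simp only: distrib_right mult_1)
    qed
    finally show ?thesis .
  qed
  have e1: "ennreal (cmod (g (Complex x y))) = ennreal (1/(pi*h)) * (ennreal (2 * pi * cmod (g (Complex x y))) * ennreal (h/2))"
  proof -
    have "1/(pi*h) * (2 * pi * cmod (g (Complex x y)) * (h/2)) = cmod (g (Complex x y))" using h by (simp add: field_simps)
    then show ?thesis using h by (simp add: ennreal_mult'[symmetric] ennreal_mult[symmetric])
  qed
  have "ennreal (cmod (g (Complex x y))) \<le> ennreal (1/(pi*h)) * (ennreal (2/h) * S * ennreal (h/2))"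
    unfolding e1 using R by (intro mult_left_mono mult_right_mono) auto
  also have "\<dots> \<le> ennreal (1/(pi*h)) * (ennreal (2/h) * (4 * Box))"
  proof -
    have "ennreal (2/h) * (S * ennreal (h/2)) \<le> ennreal (2/h) * (4 * Box)" by (rule mult_left_mono[OF S2]) simp
    then show ?thesis by (simp add: mult.assoc mult_left_mono)
  qed
  also have "\<dots> = ennreal (8 / (pi * h\<^sup>2)) * Box"
  proof -
    have "1/(pi*h) * (2/h * 4) = 8 / (pi * h\<^sup>2)" using h by (simp add: field_simps power2_eq_square)
    moreover have "ennreal (1/(pi*h)) * (ennreal (2/h) * (4 * Box)) = ennreal (1/(pi*h) * (2/h * 4)) * Box"
    proof -
      have a: "ennreal (1/(pi*h) * (2/h*4)) = ennreal (1/(pi*h)) * ennreal (2/h*4)" by (rule ennreal_mult) (use h in auto)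
      have b: "ennreal (2/h*4) = ennreal (2/h) * ennreal 4" by (rule ennreal_mult) (use h in auto)
      have c: "ennreal 4 = 4" by simp
      show ?thesis unfolding a b c by (simp only: mult.assoc)
    qed
    ultimately show ?thesis by metis
  qed
  finally show ?thesis unfolding Box_def .
qed




definition Ksl :: real where "Ksl = 16 / pi"

lemma Ksl_pos: "Ksl > 0" by (simp add: Ksl_def)

lemma SL:
  assumes holo: "f holomorphic_on right_half_plane" and h: "0 < h" "h < x"
  shows "Mf f x \<le> ennreal (Ksl / h) * (\<integral>\<^sup>+s. indicator {x-h..x+h} s * Mf f s \<partial>lborel)"
proof -
  have cont: "continuous_on right_half_plane f" using holo holomorphic_on_imp_continuous_on by blast
  note [measurable] = Fsq_measurable[OF cont]
  define g where "g = (\<lambda>z. (f z)\<^sup>2)"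
  have holog: "g holomorphic_on right_half_plane" unfolding g_def using holo by (intro holomorphic_intros)
  have GF: "Gn g = Fsq f" by (auto simp: Gn_def Fsq_def g_def fun_eq_iff norm_power)
  define c where "c = 8 / (pi * h\<^sup>2)"
  define F where "F = (\<lambda>s t. ennreal (Fsq f (Complex s t)))"
  have [measurable (raw)]: "\<And>(M::'z measure) a b. a \<in> borel_measurable M \<Longrightarrow> b \<in> borel_measurable M \<Longrightarrow> (\<lambda>x. F (a x) (b x)) \<in> borel_measurable M"
    unfolding F_def by measurable
  have "Mf f x \<le> (\<integral>\<^sup>+y. ennreal c * (\<integral>\<^sup>+s. indicator {x-h..x+h} s * (\<integral>\<^sup>+t. indicator {-h..h} (t - y) * F s t \<partial>lborel) \<partial>lborel) \<partial>lborel)"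
    unfolding Mf_def
  proof (intro nn_integral_mono)
    fix y
    have "Fsq f (Complex x y) = cmod (g (Complex x y))" using h by (simp add: Fsq_def g_def norm_power)
    then show "ennreal (Fsq f (Complex x y)) \<le> ennreal c * (\<integral>\<^sup>+s. indicator {x-h..x+h} s * (\<integral>\<^sup>+t. indicator {-h..h} (t - y) * F s t \<partial>lborel) \<partial>lborel)"
    proof -
      have "(\<integral>\<^sup>+t. indicator {y-h..y+h} t * ennreal (Fsq f (Complex s t)) \<partial>lborel) = (\<integral>\<^sup>+t. indicator {-h..h} (t - y) * F s t \<partial>lborel)" for s
        unfolding F_def by (intro nn_integral_cong) (auto simp: indicator_def)
      then show ?thesis using SMV[OF holog h, of y] \<open>Fsq f (Complex x y) = _\<close> unfolding c_def GF by simp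
    qed
  qed
  also have "\<dots> = ennreal c * (\<integral>\<^sup>+y. (\<integral>\<^sup>+s. indicator {x-h..x+h} s * (\<integral>\<^sup>+t. indicator {-h..h} (t - y) * F s t \<partial>lborel) \<partial>lborel) \<partial>lborel)"
    by (rule nn_integral_cmult) measurable
  also have "(\<integral>\<^sup>+y. (\<integral>\<^sup>+s. indicator {x-h..x+h} s * (\<integral>\<^sup>+t. indicator {-h..h} (t - y) * F s t \<partial>lborel) \<partial>lborel) \<partial>lborel)
      = (\<integral>\<^sup>+s. (\<integral>\<^sup>+y. indicator {x-h..x+h} s * (\<integral>\<^sup>+t. indicator {-h..h} (t - y) * F s t \<partial>lborel) \<partial>lborel) \<partial>lborel)"
    by (rule lborel_pair.Fubini') measurable
  also have "\<dots> = (\<integral>\<^sup>+s. indicator {x-h..x+h} s * (\<integral>\<^sup>+y. (\<integral>\<^sup>+t. indicator {-h..h} (t - y) * F s t \<partial>lborel) \<partial>lborel) \<partial>lborel)"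
    by (intro nn_integral_cong nn_integral_cmult) measurable
  also have "\<dots> = (\<integral>\<^sup>+s. indicator {x-h..x+h} s * (ennreal (2*h) * Mf f s) \<partial>lborel)"
  proof (intro nn_integral_cong arg_cong2[where f="(*)"] refl)
    fix s
    have "(\<integral>\<^sup>+y. (\<integral>\<^sup>+t. indicator {-h..h} (t - y) * F s t \<partial>lborel) \<partial>lborel)
        = (\<integral>\<^sup>+t. (\<integral>\<^sup>+y. indicator {-h..h} (t - y) * F s t \<partial>lborel) \<partial>lborel)"
      by (rule lborel_pair.Fubini'[symmetric]) measurable
    also have "\<dots> = (\<integral>\<^sup>+t. (\<integral>\<^sup>+y. F s t * indicator {t-h..t+h} y \<partial>lborel) \<partial>lborel)"
      by (intro nn_integral_cong) (auto simp: indicator_def mult.commute)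
    also have "\<dots> = (\<integral>\<^sup>+t. F s t * ennreal (2*h) \<partial>lborel)"
      using h by (intro nn_integral_cong) (simp add: nn_integral_cmult_indicator)
    also have "\<dots> = ennreal (2*h) * Mf f s"
      unfolding Mf_def F_def by (subst nn_integral_multc) (measurable, simp add: mult.commute)
    finally show "(\<integral>\<^sup>+y. (\<integral>\<^sup>+t. indicator {-h..h} (t - y) * F s t \<partial>lborel) \<partial>lborel) = ennreal (2*h) * Mf f s" .
  qed
  also have "\<dots> = ennreal (2*h) * (\<integral>\<^sup>+s. indicator {x-h..x+h} s * Mf f s \<partial>lborel)"
    by (subst nn_integral_cmult[symmetric]) (use Mf_measurable[OF cont] in measurable, simp add: mult.left_commute)
  finally have "Mf f x \<le> ennreal c * (ennreal (2*h) * (\<integral>\<^sup>+s. indicator {x-h..x+h} s * Mf f s \<partial>lborel))" .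
  moreover have "ennreal c * ennreal (2*h) = ennreal (Ksl / h)"
  proof -
    have "c * (2*h) = Ksl / h" using h unfolding c_def Ksl_def by (simp add: power2_eq_square field_simps)
    moreover have "c \<ge> 0" unfolding c_def by simp
    ultimately show ?thesis using h by (metis ennreal_mult' less_eq_real_def mult_pos_pos zero_less_numeral)
  qed
  ultimately show ?thesis by (metis mult.assoc)
qed

lemma int_powr_shift:
  assumes "-1 < \<alpha>" "0 < r"
  shows "(\<integral>\<^sup>+x. ennreal (indicator {r<..<2*r} x * (x - r) powr \<alpha>) \<partial>lborel) \<le> ennreal (r powr (\<alpha>+1) / (\<alpha>+1))"
proof -
  have m: "(\<lambda>x. ennreal (indicator {r<..<2*r} x * (x - r) powr \<alpha>)) \<in> borel_measurable borel" by measurable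
  have "(\<integral>\<^sup>+x. ennreal (indicator {r<..<2*r} x * (x - r) powr \<alpha>) \<partial>lborel)
      = (\<integral>\<^sup>+u. ennreal (indicator {r<..<2*r} (r + 1 * u) * (r + 1 * u - r) powr \<alpha>) \<partial>lborel)"
    using nn_integral_real_affine[OF m, of 1 r] by simp
  also have "\<dots> \<le> (\<integral>\<^sup>+u. ennreal (indicator {0..r} u * u powr \<alpha>) \<partial>lborel)"
    by (intro nn_integral_mono ennreal_leI) (auto simp: indicator_def)
  also have "\<dots> = ennreal (r powr (\<alpha>+1) / (\<alpha>+1))"
    using nn_integral_has_integral_lebesgue[OF _ has_integral_powr_from_0[of \<alpha> r]] assms
    by (simp add: ennreal_indicator ennreal_mult')
  finally show ?thesis .
qed

lemma Iw_bound_neg: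
  assumes a1: "-1 < \<alpha>" and a0: "\<alpha> < 0" and holo: "f holomorphic_on right_half_plane"
  shows "\<exists>K\<ge>0. \<forall>r\<ge>0. Iw \<alpha> f r \<le> ennreal K * Iw \<alpha> f 0"
proof -
  have cont: "continuous_on right_half_plane f" using holo holomorphic_on_imp_continuous_on by blast
  note Mm = Mf_measurable[OF cont]
  define C2 where "C2 = 2 * Ksl * (5/2) powr (-\<alpha>) / (\<alpha>+1)"
  define K where "K = 2 powr (-\<alpha>) + C2"
  have C2: "C2 \<ge> 0" using Ksl_pos a1 by (simp add: C2_def)
  have two: "1 \<le> 2 powr (-\<alpha>)" using a0 by (simp add: ge_one_powr_ge_zero)
  have K1: "1 \<le> K" using C2 two by (simp add: K_def)
  have "Iw \<alpha> f r \<le> ennreal K * Iw \<alpha> f 0" if r: "r \<ge> 0" for r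
  proof (cases "r = 0")
    case True
    have "Iw \<alpha> f 0 = 1 * Iw \<alpha> f 0" by simp
    also have "\<dots> \<le> ennreal K * Iw \<alpha> f 0" using K1 by (intro mult_right_mono) auto
    finally show ?thesis using True by simp
  next
    case False
    with r have r: "r > 0" by simp
    define Q where "Q = (\<integral>\<^sup>+s. indicator {r/2..5*r/2} s * Mf f s \<partial>lborel)"
    define A where "A = (\<lambda>x. ennreal (2 powr (-\<alpha>)) * (ennreal (indicator {0<..} x * (x - 0) powr \<alpha>) * Mf f x))"
    define B where "B = (\<lambda>x. ennreal (indicator {r<..<2*r} x * (x - r) powr \<alpha>) * (ennreal (Ksl / (r/2)) * Q))"
    have pw: "ennreal (indicator {r<..} x * (x - r) powr \<alpha>) * Mf f x \<le> A x + B x" for x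
    proof -
      consider "x \<le> r" | "2*r \<le> x" | "r < x" "x < 2*r" by linarith
      then show ?thesis
      proof cases
        case 1 then show ?thesis by simp
      next
        case 2
        have "(x - r) powr \<alpha> \<le> (x / 2) powr \<alpha>" using 2 r a0 by (intro powr_mono2') auto
        also have "\<dots> = 2 powr (-\<alpha>) * x powr \<alpha>"
        proof -
          have e1: "(x/2) powr \<alpha> = x powr \<alpha> / 2 powr \<alpha>" using 2 r by (simp add: powr_divide)
          have e2: "2 powr (-\<alpha>) = 1 / 2 powr \<alpha>" by (rule powr_minus_divide)
          show ?thesis unfolding e1 e2 by simp
        qed
        finally have le: "(x - r) powr \<alpha> \<le> 2 powr (-\<alpha>) * x powr \<alpha>" .
        have i1: "indicator {r<..} x = (1::real)" "indicator {0<..} x = (1::real)" using 2 r by auto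
        have "ennreal ((x - r) powr \<alpha>) \<le> ennreal (2 powr (-\<alpha>) * x powr \<alpha>)" using le by (rule ennreal_leI)
        also have "\<dots> = ennreal (2 powr (-\<alpha>)) * ennreal (x powr \<alpha>)" by (rule ennreal_mult) auto
        finally have "ennreal (indicator {r<..} x * (x - r) powr \<alpha>) \<le> ennreal (2 powr (-\<alpha>)) * ennreal (indicator {0<..} x * (x - 0) powr \<alpha>)"
          unfolding i1 by simp
        then have "ennreal (indicator {r<..} x * (x - r) powr \<alpha>) * Mf f x \<le> A x"
          unfolding A_def by (simp add: mult.assoc[symmetric] mult_right_mono)
        then show ?thesis by (simp add: add_increasing2)
      next
        case 3
        have "Mf f x \<le> ennreal (Ksl / (r/2)) * (\<integral>\<^sup>+s. indicator {x-r/2..x+r/2} s * Mf f s \<partial>lborel)"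
          using 3 r by (intro SL holo) auto
        also have "\<dots> \<le> ennreal (Ksl / (r/2)) * Q" unfolding Q_def
          using 3 by (intro mult_left_mono nn_integral_mono) (auto simp: indicator_def)
        finally have "ennreal (indicator {r<..} x * (x - r) powr \<alpha>) * Mf f x \<le> B x"
          unfolding B_def using 3 by (simp add: mult_left_mono)
        then show ?thesis by (simp add: add_increasing)
      qed
    qed
    have mA: "A \<in> borel_measurable borel" unfolding A_def using Mm by measurable
    have mB: "B \<in> borel_measurable borel" unfolding B_def by measurable
    have "Iw \<alpha> f r \<le> (\<integral>\<^sup>+x. A x + B x \<partial>lborel)" unfolding Iw_def by (intro nn_integral_mono pw)
    also have "\<dots> = (\<integral>\<^sup>+x. A x \<partial>lborel) + (\<integral>\<^sup>+x. B x \<partial>lborel)" using mA mB by (simp add: nn_integral_add)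
    also have "(\<integral>\<^sup>+x. A x \<partial>lborel) = ennreal (2 powr (-\<alpha>)) * Iw \<alpha> f 0"
      unfolding A_def Iw_def using Mm by (subst nn_integral_cmult) auto
    also have "(\<integral>\<^sup>+x. B x \<partial>lborel) = (\<integral>\<^sup>+x. ennreal (indicator {r<..<2*r} x * (x - r) powr \<alpha>) \<partial>lborel) * (ennreal (Ksl / (r/2)) * Q)"
      unfolding B_def by (subst nn_integral_multc) auto
    also have "\<dots> \<le> ennreal (r powr (\<alpha>+1) / (\<alpha>+1)) * (ennreal (Ksl / (r/2)) * (ennreal (((5/2)*r) powr (-\<alpha>)) * Iw \<alpha> f 0))"
    proof (intro mult_mono int_powr_shift a1 r order.refl)
      show "Q \<le> ennreal (((5/2)*r) powr (-\<alpha>)) * Iw \<alpha> f 0"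
        unfolding Q_def Iw_def
      proof (subst nn_integral_cmult[symmetric], (use Mm in measurable)[1], intro nn_integral_mono)
        fix s
        show "indicator {r/2..5*r/2} s * Mf f s \<le> ennreal (((5/2)*r) powr (-\<alpha>)) * (ennreal (indicator {0<..} s * (s - 0) powr \<alpha>) * Mf f s)"
        proof (cases "s \<in> {r/2..5*r/2}")
          case True
          have "((5/2)*r) powr \<alpha> \<le> s powr \<alpha>" using True r a0 by (intro powr_mono2') auto
          moreover have P: "((5/2)*r) powr \<alpha> > 0" using r by simp
          ultimately have "1 \<le> s powr \<alpha> / ((5/2)*r) powr \<alpha>" by (simp add: le_divide_eq)
          moreover have "((5/2)*r) powr (-\<alpha>) = 1 / ((5/2)*r) powr \<alpha>" by (rule powr_minus_divide)
          ultimately have le1: "1 \<le> ((5/2)*r) powr (-\<alpha>) * s powr \<alpha>" by simp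
          have s0: "s > 0" using True r by auto
          have "ennreal 1 \<le> ennreal (((5/2)*r) powr (-\<alpha>) * s powr \<alpha>)" using le1 by (rule ennreal_leI)
          also have "\<dots> = ennreal (((5/2)*r) powr (-\<alpha>)) * ennreal (s powr \<alpha>)" by (rule ennreal_mult) auto
          finally have "1 \<le> ennreal (((5/2)*r) powr (-\<alpha>)) * ennreal (indicator {0<..} s * (s - 0) powr \<alpha>)"
            using s0 by simp
          from mult_right_mono[OF this, of "Mf f s"]
          show ?thesis using True by (simp add: mult.assoc)
        qed simp
      qed
    qed auto
    also have "ennreal (r powr (\<alpha>+1) / (\<alpha>+1)) * (ennreal (Ksl / (r/2)) * (ennreal (((5/2)*r) powr (-\<alpha>)) * Iw \<alpha> f 0))
        = ennreal C2 * Iw \<alpha> f 0"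
    proof -
      have "r powr (\<alpha>+1) / (\<alpha>+1) * (Ksl / (r/2) * (((5/2)*r) powr (-\<alpha>))) = C2"
      proof -
        have "((5/2)*r) powr (-\<alpha>) = (5/2) powr (-\<alpha>) * r powr (-\<alpha>)" using r powr_mult[of "5/2" r "-\<alpha>"] by simp
        moreover have "r powr (\<alpha>+1) * r powr (-\<alpha>) = r" using r by (simp add: powr_add[symmetric])
        moreover have "\<And>p q c5::real. p * q = r \<Longrightarrow> p / (\<alpha>+1) * (Ksl / (r/2) * (c5 * q)) = 2 * Ksl * c5 / (\<alpha>+1)"
        proof -
          fix p q c5 :: real assume pq: "p * q = r"
          have "p / (\<alpha>+1) * (Ksl / (r/2) * (c5 * q)) = (p * q) * (2 * Ksl * c5) / ((\<alpha>+1) * r)"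
            by (simp add: field_simps)
          also have "\<dots> = 2 * Ksl * c5 / (\<alpha>+1)" using r a1 unfolding pq by simp
          finally show "p / (\<alpha>+1) * (Ksl / (r/2) * (c5 * q)) = 2 * Ksl * c5 / (\<alpha>+1)" .
        qed
        ultimately show ?thesis unfolding C2_def by simp
      qed
      moreover have "0 \<le> r powr (\<alpha>+1) / (\<alpha>+1)" "0 \<le> Ksl / (r/2)" using a1 r Ksl_pos by auto
      moreover have "0 \<le> ((5/2)*r) powr (-\<alpha>)" by simp
      ultimately have "ennreal C2 = ennreal (r powr (\<alpha>+1) / (\<alpha>+1)) * ennreal (Ksl / (r/2)) * ennreal (((5/2)*r) powr (-\<alpha>))"
      proof -
        fix a b c :: real
        have gen: "\<And>a b c :: real. 0 \<le> a \<Longrightarrow> 0 \<le> b \<Longrightarrow> 0 \<le> c \<Longrightarrow> ennreal (a * (b * c)) = ennreal a * ennreal b * ennreal c"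
          by (simp add: ennreal_mult mult.assoc)
        assume h: "r powr (\<alpha>+1) / (\<alpha>+1) * (Ksl / (r/2) * (((5/2)*r) powr (-\<alpha>))) = C2"
          "0 \<le> r powr (\<alpha>+1) / (\<alpha>+1)" "0 \<le> Ksl / (r/2)" "0 \<le> ((5/2)*r) powr (-\<alpha>)"
        show "ennreal C2 = ennreal (r powr (\<alpha>+1) / (\<alpha>+1)) * ennreal (Ksl / (r/2)) * ennreal (((5/2)*r) powr (-\<alpha>))"
          unfolding h(1)[symmetric] using gen h(2-4) by blast
      qed
      then show ?thesis by (simp add: mult.assoc)
    qed
    finally have "Iw \<alpha> f r \<le> ennreal (2 powr (-\<alpha>)) * Iw \<alpha> f 0 + ennreal C2 * Iw \<alpha> f 0" by (auto intro: add_left_mono)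
    also have "\<dots> = ennreal K * Iw \<alpha> f 0"
    proof -
      have "ennreal K = ennreal (2 powr (-\<alpha>)) + ennreal C2" unfolding K_def using C2 by (intro ennreal_plus) simp_all
      then show ?thesis by (simp add: distrib_right)
    qed
    finally show ?thesis .
  qed
  then show ?thesis using K1 by (intro exI[of _ K]) auto
qed




theorem mainTheorem3:
  fixes \<alpha> a :: real and b :: complex
  assumes "\<alpha> > -1" and "a > 0" and "Re b \<ge> 0"
  shows "\<not> (\<exists>f \<in> bergman_space \<alpha>.
             liminf (\<lambda>n. bergman_norm \<alpha> ((comp_op (\<lambda>w. complex_of_real a * w + b) ^^ n) f)) = 0 \<and>
             limsup (\<lambda>n. bergman_norm \<alpha> ((comp_op (\<lambda>w. complex_of_real a * w + b) ^^ n) f)) = \<infinity>)"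
proof
  assume "\<exists>f \<in> bergman_space \<alpha>.
             liminf (\<lambda>n. bergman_norm \<alpha> ((comp_op (\<lambda>w. complex_of_real a * w + b) ^^ n) f)) = 0 \<and>
             limsup (\<lambda>n. bergman_norm \<alpha> ((comp_op (\<lambda>w. complex_of_real a * w + b) ^^ n) f)) = \<infinity>"
  then obtain f where fB: "f \<in> bergman_space \<alpha>"
    and li: "liminf (\<lambda>n. bergman_norm \<alpha> ((comp_op (\<lambda>w. complex_of_real a * w + b) ^^ n) f)) = 0"
    and ls: "limsup (\<lambda>n. bergman_norm \<alpha> ((comp_op (\<lambda>w. complex_of_real a * w + b) ^^ n) f)) = \<infinity>"
    by blast
  define S where "S n = (\<Sum>k<n. a^k)" for n
  define g where "g n = (comp_op (\<lambda>w. complex_of_real a * w + b) ^^ n) f" for n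
  have holo: "f holomorphic_on right_half_plane" and fin: "bergman_sqnorm \<alpha> f < \<infinity>"
    using fB by (auto simp: bergman_space_def)
  have cont: "continuous_on right_half_plane f" using holo holomorphic_on_imp_continuous_on by blast
  have S0: "S n \<ge> 0" for n unfolding S_def using assms by (auto intro!: sum_nonneg)
  have an: "a^n > 0" for n using assms by simp
  have ReD: "Re (b * of_real (S n)) = Re b * S n" for n by simp
  have gsq: "bergman_sqnorm \<alpha> (g n) = ennreal (1/pi) * (ennreal ((a^n) powr (-2-\<alpha>)) * Iw \<alpha> f (Re b * S n))" for n
    unfolding g_def iter_eq S_def[symmetric]
    using sqnorm_affine[OF cont an[of n], of "b * of_real (S n)" \<alpha>] ReD[of n] S0[of n] assms
    by simp
  have f0: "bergman_sqnorm \<alpha> f = ennreal (1/pi) * Iw \<alpha> f 0"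
    using sqnorm_affine[OF cont, of 1 0 \<alpha>] by (simp add: o_def)
  show False
  proof (cases "a \<ge> 1")
    case True
    obtain K where K: "K \<ge> 0" "\<And>r. r \<ge> 0 \<Longrightarrow> Iw \<alpha> f r \<le> ennreal K * Iw \<alpha> f 0"
    proof (cases "\<alpha> \<ge> 0")
      case True
      then show ?thesis using that[of 1] Iw_mono_pos by auto
    next
      case False
      then show ?thesis using that Iw_bound_neg[OF assms(1) _ holo] by force
    qed
    define B where "B = ennreal K * bergman_sqnorm \<alpha> f"
    have Bfin: "B < \<infinity>" using fin by (simp add: B_def ennreal_mult_less_top)
    have "bergman_sqnorm \<alpha> (g n) \<le> B" for n
    proof -
      have "(a^n) powr (-2-\<alpha>) \<le> 1" using True assms by (intro powr_le1_neg) (auto simp: one_le_power)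
      then have "ennreal ((a^n) powr (-2-\<alpha>)) * Iw \<alpha> f (Re b * S n) \<le> 1 * (ennreal K * Iw \<alpha> f 0)"
        using K(2)[of "Re b * S n"] S0[of n] assms
        by (intro mult_mono) (auto simp: ennreal_leI)
      then have "ennreal (1/pi) * (ennreal ((a^n) powr (-2-\<alpha>)) * Iw \<alpha> f (Re b * S n)) \<le> ennreal (1/pi) * (ennreal K * Iw \<alpha> f 0)"
        by (intro mult_left_mono) auto
      then show ?thesis unfolding gsq B_def f0
        by (simp add: mult.left_commute)
    qed
    then have "\<forall>n. bergman_norm \<alpha> (g n) \<le> ereal (sqrt (enn2real B))"
      using norm_le_bound Bfin by blast
    then have "limsup (\<lambda>n. bergman_norm \<alpha> (g n)) \<le> ereal (sqrt (enn2real B))"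
      by (intro Limsup_bounded) auto
    then show False using ls unfolding g_def by simp
  next
    case False
    define R where "R = Re b / (1 - a)"
    have R0: "R \<ge> 0" using False assms by (simp add: R_def)
    have SR: "Re b * S n \<le> R" for n
    proof -
      have "S n = (1 - a^n) / (1 - a)" unfolding S_def using False by (subst sum_gp_strict) auto
      also have "\<dots> \<le> 1 / (1 - a)" using False an[of n] by (intro divide_right_mono) auto
      finally show ?thesis unfolding R_def using assms False
        by (simp add: mult_left_mono divide_inverse)
    qed
    show False
    proof (cases "\<exists>z0. Re z0 > R \<and> f z0 \<noteq> 0")
      case True
      then obtain z0 where z0: "Re z0 > R" "f z0 \<noteq> 0" by blast
      obtain \<delta> where \<delta>: "\<delta> > 0" "\<And>r. 0 \<le> r \<Longrightarrow> r \<le> R \<Longrightarrow> ennreal \<delta> \<le> Iw \<alpha> f r"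
        using Iw_lower[OF cont R0 z0, of \<alpha>] by blast
      have "ennreal (\<delta>/pi) \<le> bergman_sqnorm \<alpha> (g n)" for n
      proof -
        have "1 \<le> (a^n) powr (-2-\<alpha>)" using False assms an[of n]
          by (intro powr_ge1_neg) (auto simp: power_le_one)
        then have "1 * ennreal \<delta> \<le> ennreal ((a^n) powr (-2-\<alpha>)) * Iw \<alpha> f (Re b * S n)"
          using \<delta>(2)[of "Re b * S n"] S0[of n] assms SR[of n]
          by (intro mult_mono) (auto simp: ennreal_leI)
        then have "ennreal (1/pi) * (1 * ennreal \<delta>) \<le> ennreal (1/pi) * (ennreal ((a^n) powr (-2-\<alpha>)) * Iw \<alpha> f (Re b * S n))"
          by (intro mult_left_mono) auto
        moreover have "ennreal (\<delta>/pi) = ennreal (1/pi) * (1 * ennreal \<delta>)"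
          using \<delta>(1) by (simp add: ennreal_mult'[symmetric])
        ultimately show ?thesis unfolding gsq by simp
      qed
      then have "\<forall>n. ereal (sqrt (\<delta>/pi)) \<le> bergman_norm \<alpha> (g n)"
        using norm_ge_bound \<delta>(1) by (metis less_eq_real_def divide_nonneg_pos pi_gt_zero)
      then have "ereal (sqrt (\<delta>/pi)) \<le> liminf (\<lambda>n. bergman_norm \<alpha> (g n))"
        by (intro Liminf_bounded) auto
      then show False using li \<delta>(1) unfolding g_def using pi_gt_zero by (simp add: divide_le_0_iff)
    next
      case False
      then have fz: "f z = 0" if "z \<in> right_half_plane" for z
      proof -
        have "of_real (R+1) islimpt {z. R < Re z}"
          by (rule open_imp_islimpt) (auto simp: open_halfspace_Re_gt)
        moreover have "{z. R < Re z} \<subseteq> {z. 0 < Re z}" using R0 by auto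
        ultimately show ?thesis
          using analytic_continuation[OF holo open_rhp, of "{z. Re z > R}" "of_real (R+1)" z] that R0 False
          by (auto simp: right_half_plane_def)
      qed
      have "bergman_sqnorm \<alpha> (g n) = 0" for n
      proof -
        have "g n = f \<circ> (\<lambda>w. of_real (a^n) * w + b * of_real (S n))"
          unfolding g_def iter_eq S_def ..
        moreover have Z: "indicator right_half_plane z * ennreal ((cmod (f (of_real (a^n) * z + b * of_real (S n))))\<^sup>2 * Re z powr \<alpha>) = 0" for z
        proof (cases "Re z > 0")
          case True
          then have "Re (of_real (a^n) * z + b * of_real (S n)) > 0"
            using an[of n] S0[of n] assms by (simp add: add_pos_nonneg)
          then show ?thesis using fz by (simp add: right_half_plane_def)
        next
          case False then show ?thesis by (simp add: right_half_plane_def)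
        qed
        moreover have "(\<lambda>z. indicator right_half_plane z * ennreal ((cmod (f (of_real (a^n) * z + b * of_real (S n))))\<^sup>2 * Re z powr \<alpha>)) = (\<lambda>z. 0)"
          by (rule ext) (rule Z)
        ultimately show ?thesis unfolding bergman_sqnorm_def comp_def by simp
      qed
      then have "\<forall>n. bergman_norm \<alpha> (g n) = 0" by (simp add: bergman_norm_def)
      then show False using ls unfolding g_def[symmetric] by (simp add: Limsup_const)
    qed
  qed
qed


end
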